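(* Let $\mathcal{L}$, $t$, $p<1$, $q$ (with $p^2+q>1$), $A$, $\delta$, $\lambda$ be as in the setting below. Let $(G,\mathbf{x})$ be a configuration, $\mathrm{Id}$ an identity assignment, and $(S,U_1,U_2)$ a splitter of $(G,\mathbf{x},\mathrm{Id})$ with $r_S\ge1$, such that $(G[U_1\cup S],\mathbf{x}[U_1\cup S])\in\mathcal{L}$. Let $d=\lambda r_S$. Then there exists an integer $i$ with $2r_S<i<d-2r_S$ and $i\notin I$, where $$I=\{i\in\mathbb{Z}: 2r_S<i<d-2r_S,\ \Pr[\mathcal{E}(S_i)]<1-\delta\}.$$
   Context: Setting. $\mathcal{L}$ is a distributed language (a decidable set of configurations $(G,\mathbf{x})$, with $G$ a finite connected graph and $\mathbf{x}:V(G)\to\{0,1\}^*$). $t$ is a time bound, i.e., a function of triplets $(G,\mathbf{x},\mathrm{Id})$ that is non-decreasing under passing to connected induced subgraphs with restricted inputs and identities. $p,q\in(0,1]$ satisfy $p^2+q>1$ and $p<1$. $A$ is a randomized algorithm in the synchronous LOCAL model running in time $t$ that is a $(p,q)$-decider for $\mathcal{L}$: for every configuration and injective identity assignment $\mathrm{Id}$, members are accepted by all nodes with probability at least $p$, and non-members are rejected by some node with probability at least $q$. In this model, the output of $v$ after $r$ rounds depends only on the identities, inputs, adjacencies and random bits in the ball $B_G(v,r)$. Fix $\delta$ with $0<\delta<p^2+q-1$ and $\lambda=11\lceil\log p/\log(1-\delta)\rceil$. Notation relative to $A$ and $(G,\mathbf{x},\mathrm{Id})$: - $t_v$ is the maximum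 over all coin tosses of the number of rounds until $v$ outputs. - $r_v=\max\{t_u: v\in B_G(u,t_u)\}$, and $r_S=\max_{v\in S} r_v$. - A splitter is a triple $(S,U_1,U_2)$ of pairwise disjoint sets covering $V(G)$ with $\min\{\mathrm{dist}_G(u,v):u\in U_1,v\in U_2\}\ge\lambda r_S$. - For $u\in S$, its level is $\ell(u)=\min_{w\in U_1}\mathrm{dist}_G(w,u)$, and $L_j$ is the set of nodes of $S$ of level $j$. - For an integer $i$ with $r_S<i<d-r_S$, $S_i=\bigcup_{j=i-r_S}^{i+r_S}L_j$. - For $U\subseteq V(G)$, $\mathcal{E}(U)$ is the event that, when $A$ runs on $(G,\mathbf{x})$ with $\mathrm{Id}$, all nodes of $U$ output "yes". *)

theory Defs
  imports "HOL-Probability.Probability"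
begin

fun rw :: "'v set \<Rightarrow> ('v \<Rightarrow> 'v \<Rightarrow> bool) \<Rightarrow> nat \<Rightarrow> 'v \<Rightarrow> 'v \<Rightarrow> bool" where
  "rw V E 0 u w = (u = w \<and> u \<in> V)"
| "rw V E (Suc n) u w = (rw V E n u w \<or> (\<exists>z. rw V E n u z \<and> w \<in> V \<and> E z w))"

definition ball :: "'v set \<Rightarrow> ('v \<Rightarrow> 'v \<Rightarrow> bool) \<Rightarrow> 'v \<Rightarrow> nat \<Rightarrow> 'v set" where
  "ball V E v r = {w. rw V E r v w}"

definition gdist :: "'v set \<Rightarrow> ('v \<Rightarrow> 'v \<Rightarrow> bool) \<Rightarrow> 'v \<Rightarrow> 'v \<Rightarrow> nat" where
  "gdist V E u w = (LEAST n. rw V E n u w)"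

definition connected_graph :: "'v set \<Rightarrow> ('v \<Rightarrow> 'v \<Rightarrow> bool) \<Rightarrow> bool" where
  "connected_graph V E \<longleftrightarrow> finite V \<and> V \<noteq> {} \<and>
     (\<forall>a b. E a b \<longrightarrow> a \<in> V \<and> b \<in> V \<and> E b a \<and> a \<noteq> b) \<and>
     (\<forall>u\<in>V. \<forall>w\<in>V. \<exists>n. rw V E n u w)"

definition induced :: "('v \<Rightarrow> 'v \<Rightarrow> bool) \<Rightarrow> 'v set \<Rightarrow> 'v \<Rightarrow> 'v \<Rightarrow> bool" where
  "induced E W = (\<lambda>a b. E a b \<and> a \<in> W \<and> b \<in> W)"

definition coin_space :: "(nat \<Rightarrow> bool) measure" where
  "coin_space = PiM UNIV (\<lambda>_. measure_pmf (bernoulli_pmf (1/2)))"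

definition rand_space :: "'v set \<Rightarrow> ('v \<Rightarrow> nat \<Rightarrow> bool) measure" where
  "rand_space V = PiM V (\<lambda>_. coin_space)"

text \<open>A V E x ids \<omega> v r is the state of node v after r rounds: None = no output yet,
  Some b = v has output b (True = yes).\<close>
type_synonym 'v alg =
  "'v set \<Rightarrow> ('v \<Rightarrow> 'v \<Rightarrow> bool) \<Rightarrow> ('v \<Rightarrow> bool list) \<Rightarrow> ('v \<Rightarrow> nat) \<Rightarrow> ('v \<Rightarrow> nat \<Rightarrow> bool)
   \<Rightarrow> 'v \<Rightarrow> nat \<Rightarrow> bool option"

type_synonym 'v tbound = "'v set \<Rightarrow> ('v \<Rightarrow> 'v \<Rightarrow> bool) \<Rightarrow> ('v \<Rightarrow> bool list) \<Rightarrow> ('v \<Rightarrow> nat) \<Rightarrow> nat"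

type_synonym 'v language = "('v set \<times> ('v \<Rightarrow> 'v \<Rightarrow> bool) \<times> ('v \<Rightarrow> bool list)) set"

definition local_alg :: "'v alg \<Rightarrow> bool" where
  "local_alg A \<longleftrightarrow> (\<forall>V E x ids \<omega> V' E' x' ids' \<omega>' v r.
     connected_graph V E \<and> connected_graph V' E' \<and>
     \<omega> \<in> space (rand_space V) \<and> \<omega>' \<in> space (rand_space V') \<and>
     v \<in> V \<and> v \<in> V' \<and> ball V E v r = ball V' E' v r \<and>
     (\<forall>a\<in>ball V E v r. \<forall>b\<in>ball V E v r. E a b = E' a b) \<and>
     (\<forall>a\<in>ball V E v r. x a = x' a \<and> ids a = ids' a \<and> \<omega> a = \<omega>' a)
     \<longrightarrow> A V E x ids \<omega> v r = A V' E' x' ids' \<omega>' v r)"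

definition measurable_alg :: "'v alg \<Rightarrow> bool" where
  "measurable_alg A \<longleftrightarrow> (\<forall>V E x ids v r. connected_graph V E \<and> v \<in> V \<longrightarrow>
     (\<lambda>\<omega>. A V E x ids \<omega> v r) \<in> rand_space V \<rightarrow>\<^sub>M count_space UNIV)"

definition halt_round :: "'v alg \<Rightarrow> 'v set \<Rightarrow> ('v \<Rightarrow> 'v \<Rightarrow> bool) \<Rightarrow> ('v \<Rightarrow> bool list)
    \<Rightarrow> ('v \<Rightarrow> nat) \<Rightarrow> ('v \<Rightarrow> nat \<Rightarrow> bool) \<Rightarrow> 'v \<Rightarrow> nat" where
  "halt_round A V E x ids \<omega> v = (LEAST r. A V E x ids \<omega> v r \<noteq> None)"

definition outp :: "'v alg \<Rightarrow> 'v set \<Rightarrow> ('v \<Rightarrow> 'v \<Rightarrow> bool) \<Rightarrow> ('v \<Rightarrow> bool list)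
    \<Rightarrow> ('v \<Rightarrow> nat) \<Rightarrow> ('v \<Rightarrow> nat \<Rightarrow> bool) \<Rightarrow> 'v \<Rightarrow> bool" where
  "outp A V E x ids \<omega> v =
     (case A V E x ids \<omega> v (halt_round A V E x ids \<omega> v) of Some b \<Rightarrow> b | None \<Rightarrow> False)"

definition runs_in_time :: "'v alg \<Rightarrow> 'v tbound \<Rightarrow> bool" where
  "runs_in_time A t \<longleftrightarrow> (\<forall>V E x ids. connected_graph V E \<and> inj_on ids V \<longrightarrow>
     (\<forall>\<omega>\<in>space (rand_space V). \<forall>v\<in>V. A V E x ids \<omega> v (t V E x ids) \<noteq> None))"

definition time_bound_mono :: "'v tbound \<Rightarrow> bool" where
  "time_bound_mono t \<longleftrightarrow> (\<forall>V E x ids W. connected_graph V E \<and> W \<subseteq> V \<and>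
     connected_graph W (induced E W) \<longrightarrow> t W (induced E W) x ids \<le> t V E x ids)"

definition Ev :: "'v alg \<Rightarrow> 'v set \<Rightarrow> ('v \<Rightarrow> 'v \<Rightarrow> bool) \<Rightarrow> ('v \<Rightarrow> bool list)
    \<Rightarrow> ('v \<Rightarrow> nat) \<Rightarrow> 'v set \<Rightarrow> ('v \<Rightarrow> nat \<Rightarrow> bool) set" where
  "Ev A V E x ids U = {\<omega> \<in> space (rand_space V). \<forall>u\<in>U. outp A V E x ids \<omega> u}"

definition decider :: "'v alg \<Rightarrow> 'v language \<Rightarrow> real \<Rightarrow> real \<Rightarrow> bool" where
  "decider A L p q \<longleftrightarrow> (\<forall>V E x ids. connected_graph V E \<and> inj_on ids V \<longrightarrow>
     ((V, E, restrict x V) \<in> L \<longrightarrow> p \<le> measure (rand_space V) (Ev A V E x ids V)) \<and>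
     ((V, E, restrict x V) \<notin> L \<longrightarrow> q \<le> measure (rand_space V)
         {\<omega> \<in> space (rand_space V). \<exists>v\<in>V. \<not> outp A V E x ids \<omega> v}))"

definition t_node :: "'v alg \<Rightarrow> 'v set \<Rightarrow> ('v \<Rightarrow> 'v \<Rightarrow> bool) \<Rightarrow> ('v \<Rightarrow> bool list)
    \<Rightarrow> ('v \<Rightarrow> nat) \<Rightarrow> 'v \<Rightarrow> nat" where
  "t_node A V E x ids v = Max {halt_round A V E x ids \<omega> v | \<omega>. \<omega> \<in> space (rand_space V)}"

definition r_node :: "'v alg \<Rightarrow> 'v set \<Rightarrow> ('v \<Rightarrow> 'v \<Rightarrow> bool) \<Rightarrow> ('v \<Rightarrow> bool list)
    \<Rightarrow> ('v \<Rightarrow> nat) \<Rightarrow> 'v \<Rightarrow> nat" where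
  "r_node A V E x ids v = Max {t_node A V E x ids u | u. u \<in> V \<and> v \<in> ball V E u (t_node A V E x ids u)}"

definition r_set :: "'v alg \<Rightarrow> 'v set \<Rightarrow> ('v \<Rightarrow> 'v \<Rightarrow> bool) \<Rightarrow> ('v \<Rightarrow> bool list)
    \<Rightarrow> ('v \<Rightarrow> nat) \<Rightarrow> 'v set \<Rightarrow> nat" where
  "r_set A V E x ids S = Max (r_node A V E x ids ` S)"

definition splitter :: "'v alg \<Rightarrow> 'v set \<Rightarrow> ('v \<Rightarrow> 'v \<Rightarrow> bool) \<Rightarrow> ('v \<Rightarrow> bool list)
    \<Rightarrow> ('v \<Rightarrow> nat) \<Rightarrow> nat \<Rightarrow> 'v set \<Rightarrow> 'v set \<Rightarrow> 'v set \<Rightarrow> bool" where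
  "splitter A V E x ids lam S U1 U2 \<longleftrightarrow>
     S \<inter> U1 = {} \<and> S \<inter> U2 = {} \<and> U1 \<inter> U2 = {} \<and> S \<union> U1 \<union> U2 = V \<and>
     (\<forall>u\<in>U1. \<forall>w\<in>U2. lam * r_set A V E x ids S \<le> gdist V E u w)"

definition level :: "'v set \<Rightarrow> ('v \<Rightarrow> 'v \<Rightarrow> bool) \<Rightarrow> 'v set \<Rightarrow> 'v \<Rightarrow> nat" where
  "level V E U1 u = Min ((\<lambda>w. gdist V E w u) ` U1)"

definition slab :: "'v set \<Rightarrow> ('v \<Rightarrow> 'v \<Rightarrow> bool) \<Rightarrow> 'v set \<Rightarrow> 'v set \<Rightarrow> nat \<Rightarrow> int \<Rightarrow> 'v set" where
  "slab V E U1 S r i = (\<Union>j\<in>{i - int r .. i + int r}. {u \<in> S. int (level V E U1 u) = j})"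

end

theory Submission
  imports Defs
begin

lemma space_coin: "space coin_space = UNIV"
  by (auto simp: coin_space_def space_PiM PiE_def extensional_def)

lemma prob_coin: "prob_space coin_space"
  unfolding coin_space_def by (intro prob_space_PiM prob_space_measure_pmf)

lemma prob_rand: "prob_space (rand_space V)"
  unfolding rand_space_def by (intro prob_space_PiM prob_coin)

lemma coinP: "product_prob_space (\<lambda>_::'a. coin_space)"
  by (simp add: product_prob_space_def product_sigma_finite_def prob_coin prob_space_imp_sigma_finite product_prob_space_axioms_def)

lemma indep_coords:
  fixes V :: "'a set"
  assumes "V \<noteq> {}" and fin: "finite V"
  shows "prob_space.indep_vars (rand_space V) (\<lambda>_. coin_space) (\<lambda>i \<omega>. \<omega> i) V"
proof -
  interpret P: prob_space "rand_space V" by (rule prob_rand)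
  have rv: "(\<lambda>\<omega>. \<omega> i) \<in> measurable (rand_space V) coin_space" for i :: 'a
  proof (cases "i \<in> V")
    case True then show ?thesis unfolding rand_space_def by (rule measurable_component_singleton)
  next
    case False
    have "(\<lambda>\<omega>. undefined) \<in> measurable (rand_space V) coin_space" by (simp add: space_coin)
    moreover have "\<omega> \<in> space (rand_space V) \<Longrightarrow> undefined = \<omega> i" for \<omega>
      using False by (auto simp: rand_space_def space_PiM PiE_def extensional_def)
    ultimately show ?thesis by (subst measurable_cong[where g="\<lambda>_. undefined"]) auto
  qed
  show ?thesis
  proof (subst P.indep_vars_iff_distr_eq_PiM[OF assms(1) rv])
    have 1: "distr (rand_space V) (Pi\<^sub>M V (\<lambda>i. coin_space)) (\<lambda>x. restrict (\<lambda>i. x i) V) = rand_space V"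
      unfolding rand_space_def
      by (subst product_prob_space.distr_restrict[OF coinP, symmetric]) (auto simp: fin)
    show "distr (rand_space V) (Pi\<^sub>M V (\<lambda>i. coin_space)) (\<lambda>x. restrict (\<lambda>i. x i) V) =
        Pi\<^sub>M V (\<lambda>i. distr (rand_space V) coin_space (\<lambda>\<omega>. \<omega> i))"
      unfolding 1 unfolding rand_space_def
      by (intro PiM_cong refl distr_PiM_component[symmetric] prob_coin)
  qed
qed

lemma rw_in: "rw V E n u w \<Longrightarrow> u \<in> V \<and> w \<in> V"
  by (induction n arbitrary: w) auto

lemma rw_mono: "rw V E n u w \<Longrightarrow> n \<le> m \<Longrightarrow> rw V E m u w"
  by (induction m) (auto simp: le_Suc_eq)

lemma rw_trans: "rw V E m a b \<Longrightarrow> rw V E n b c \<Longrightarrow> rw V E (m+n) a c"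
proof (induction n arbitrary: c)
  case 0 then show ?case by simp
next
  case (Suc n)
  from Suc.prems(2) show ?case
    using Suc.IH[OF Suc.prems(1)] by auto
qed

lemma rw_refl: "u \<in> V \<Longrightarrow> rw V E n u u"
  using rw_mono[of V E 0 u u n] by simp

lemma conn_sym: "connected_graph V E \<Longrightarrow> E a b \<Longrightarrow> E b a"
  unfolding connected_graph_def by blast

lemma conn_edge: "connected_graph V E \<Longrightarrow> E a b \<Longrightarrow> a \<in> V \<and> b \<in> V"
  unfolding connected_graph_def by blast

lemma rw_sym: assumes G: "connected_graph V E" shows "rw V E n a b \<Longrightarrow> rw V E n b a"
proof (induction n arbitrary: b)
  case 0 then show ?case by auto
next
  case (Suc n)
  show ?case
  proof (cases "rw V E n a b")
    case True then show ?thesis using Suc.IH by simp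
  next
    case False
    then obtain z where z: "rw V E n a z" "b \<in> V" "E z b" using Suc.prems by auto
    have "rw V E (Suc 0) b z" using z conn_sym[OF G z(3)] conn_edge[OF G z(3)] by auto
    from rw_trans[OF this Suc.IH[OF z(1)]] show ?thesis by simp
  qed
qed

lemma gd_rw: "connected_graph V E \<Longrightarrow> u \<in> V \<Longrightarrow> w \<in> V \<Longrightarrow> rw V E (gdist V E u w) u w"
  unfolding gdist_def connected_graph_def by (meson LeastI_ex)

lemma gd_le: "rw V E n u w \<Longrightarrow> gdist V E u w \<le> n"
  unfolding gdist_def by (rule Least_le)

lemma gd_tri: "connected_graph V E \<Longrightarrow> a \<in> V \<Longrightarrow> b \<in> V \<Longrightarrow> c \<in> V \<Longrightarrow>
   gdist V E a c \<le> gdist V E a b + gdist V E b c"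
  by (meson gd_le gd_rw rw_trans)

lemma gd_sym: "connected_graph V E \<Longrightarrow> a \<in> V \<Longrightarrow> b \<in> V \<Longrightarrow> gdist V E a b = gdist V E b a"
  by (meson antisym gd_le gd_rw rw_sym)

lemma ball_iff: "w \<in> ball V E u n \<longleftrightarrow> rw V E n u w"
  by (simp add: ball_def)

lemma level_le: "finite U1 \<Longrightarrow> w \<in> U1 \<Longrightarrow> level V E U1 u \<le> gdist V E w u"
  unfolding level_def by simp

lemma level_ex: "finite U1 \<Longrightarrow> U1 \<noteq> {} \<Longrightarrow> \<exists>w\<in>U1. level V E U1 u = gdist V E w u"
  unfolding level_def
  by (metis (no_types, lifting) Min_in finite_imageI image_iff image_is_empty)

lemma level_lip:
  assumes G: "connected_graph V E" and "U1 \<subseteq> V" "U1 \<noteq> {}" "u \<in> V" "v \<in> V"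
  shows "level V E U1 v \<le> level V E U1 u + gdist V E u v"
proof -
  have fin: "finite U1" using assms G unfolding connected_graph_def by (meson finite_subset)
  obtain w where w: "w \<in> U1" "level V E U1 u = gdist V E w u" using level_ex[OF fin assms(3)] by blast
  have "level V E U1 v \<le> gdist V E w v" by (rule level_le[OF fin w(1)])
  also have "\<dots> \<le> gdist V E w u + gdist V E u v" using gd_tri[OF G] w assms by auto
  finally show ?thesis using w by simp
qed

lemma rw_induced1: "W \<subseteq> V \<Longrightarrow> rw W (induced E W) m u w \<Longrightarrow> rw V E m u w"
  by (induction m arbitrary: w) (auto simp: induced_def)

lemma rw_induced2: "rw V E m u w \<Longrightarrow> (\<forall>y. rw V E m u y \<longrightarrow> y \<in> W) \<Longrightarrow> rw W (induced E W) m u w"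
proof (induction m arbitrary: w)
  case 0 then show ?case by auto
next
  case (Suc m)
  have H: "\<forall>y. rw V E m u y \<longrightarrow> y \<in> W" using Suc.prems(2) by auto
  show ?case
  proof (cases "rw V E m u w")
    case True then show ?thesis using Suc.IH H by simp
  next
    case False
    then obtain z where z: "rw V E m u z" "w \<in> V" "E z w" using Suc.prems by auto
    have "w \<in> W" using Suc.prems by blast
    moreover have "z \<in> W" using H z by blast
    ultimately show ?thesis using Suc.IH[OF z(1) H] z by (auto simp: induced_def)
  qed
qed

lemma least_eq:
  fixes f g :: "nat \<Rightarrow> 'b option"
  assumes "\<forall>n\<le>R. f n = g n" "f m \<noteq> None" "m \<le> R"
  shows "(LEAST n. f n \<noteq> None) = (LEAST n. g n \<noteq> None)"
proof -
  let ?l = "LEAST n. f n \<noteq> None"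
  have l1: "f ?l \<noteq> None" using assms(2) by (rule LeastI[of "\<lambda>n. f n \<noteq> None"])
  have l2: "?l \<le> m" using assms(2) by (rule Least_le[of "\<lambda>n. f n \<noteq> None"])
  have l3: "n < ?l \<Longrightarrow> f n = None" for n using not_less_Least by blast
  show ?thesis
  proof (rule Least_equality[symmetric])
    show "g ?l \<noteq> None" using l1 l2 assms by auto
    fix y assume "g y \<noteq> None"
    then show "?l \<le> y" using l3 l2 assms by (metis less_le_trans not_le_imp_less order.strict_implies_order)
  qed
qed

lemma local_algD:
  assumes "local_alg A" "connected_graph V E" "connected_graph V' E'"
     "\<omega> \<in> space (rand_space V)" "\<omega>' \<in> space (rand_space V')"
     "v \<in> V" "v \<in> V'" "ball V E v r = ball V' E' v r"
     "\<forall>a\<in>ball V E v r. \<forall>b\<in>ball V E v r. E a b = E' a b"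
     "\<forall>a\<in>ball V E v r. x a = x' a \<and> ids a = ids' a \<and> \<omega> a = \<omega>' a"
  shows "A V E x ids \<omega> v r = A V' E' x' ids' \<omega>' v r"
  using assms(1) unfolding local_alg_def
  apply -
  apply (erule allE[where x=V], erule allE[where x=E], erule allE[where x=x], erule allE[where x=ids], erule allE[where x=\<omega>])
  apply (erule allE[where x=V'], erule allE[where x=E'], erule allE[where x=x'], erule allE[where x=ids'], erule allE[where x=\<omega>'])
  apply (erule allE[where x=v], erule allE[where x=r])
  apply (erule impE)
  using assms(2-) by blast+

lemma outp_local:
  assumes AL: "local_alg A" and G: "connected_graph V E" and G': "connected_graph V' E'"
    and om: "\<omega> \<in> space (rand_space V)" and om': "\<omega>' \<in> space (rand_space V')"
    and u: "u \<in> V" "u \<in> V'"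
    and balls: "\<forall>n\<le>R. ball V E u n = ball V' E' u n"
    and edges: "\<forall>a\<in>ball V E u R. \<forall>b\<in>ball V E u R. E a b = E' a b"
    and omeq: "\<forall>a\<in>ball V E u R. \<omega> a = \<omega>' a"
    and hr: "halt_round A V E x ids \<omega> u \<le> R"
    and hn: "A V E x ids \<omega> u (halt_round A V E x ids \<omega> u) \<noteq> None"
  shows "outp A V E x ids \<omega> u = outp A V' E' x ids \<omega>' u"
proof -
  have sub: "n \<le> R \<Longrightarrow> ball V E u n \<subseteq> ball V E u R" for n
    by (auto simp: ball_iff intro: rw_mono)
  have eq: "\<forall>n\<le>R. A V E x ids \<omega> u n = A V' E' x ids \<omega>' u n"
  proof (intro allI impI)
    fix n assume n: "n \<le> R"
    show "A V E x ids \<omega> u n = A V' E' x ids \<omega>' u n"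
      proof (rule local_algD[OF AL G G' om om' u])
      show "ball V E u n = ball V' E' u n" using balls n by blast
      show "\<forall>a\<in>ball V E u n. \<forall>b\<in>ball V E u n. E a b = E' a b" using sub[OF n] edges by blast
      show "\<forall>a\<in>ball V E u n. x a = x a \<and> ids a = ids a \<and> \<omega> a = \<omega>' a" using sub[OF n] omeq by blast
    qed
  qed
  have "halt_round A V E x ids \<omega> u = halt_round A V' E' x ids \<omega>' u"
    unfolding halt_round_def using least_eq[OF eq hn[unfolded halt_round_def] hr[unfolded halt_round_def]] .
  then show ?thesis unfolding outp_def using eq hr by metis
qed

lemma halt_facts:
  assumes "runs_in_time A t" "connected_graph V E" "inj_on ids V" "\<omega> \<in> space (rand_space V)" "u \<in> V"
  shows "halt_round A V E x ids \<omega> u \<le> t V E x ids \<and> A V E x ids \<omega> u (halt_round A V E x ids \<omega> u) \<noteq> None"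
proof -
  have h: "A V E x ids \<omega> u (t V E x ids) \<noteq> None" using assms unfolding runs_in_time_def by blast
  show ?thesis unfolding halt_round_def
    using Least_le[of "\<lambda>r. A V E x ids \<omega> u r \<noteq> None", OF h] LeastI[of "\<lambda>r. A V E x ids \<omega> u r \<noteq> None", OF h]
    by blast
qed

lemma halt_le_tnode:
  assumes "runs_in_time A t" "connected_graph V E" "inj_on ids V" "\<omega> \<in> space (rand_space V)" "u \<in> V"
  shows "halt_round A V E x ids \<omega> u \<le> t_node A V E x ids u"
proof -
  have "{halt_round A V E x ids \<omega> u |\<omega>. \<omega> \<in> space (rand_space V)} \<subseteq> {..t V E x ids}"
    using halt_facts[OF assms(1-3) _ assms(5)] by auto
  then have "finite {halt_round A V E x ids \<omega> u |\<omega>. \<omega> \<in> space (rand_space V)}"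
    using finite_subset by blast
  then show ?thesis unfolding t_node_def using assms(4) by (intro Max_ge) auto
qed

lemma tnode_le_rset:
  assumes G: "connected_graph V E" and "S \<subseteq> V" "u \<in> S"
  shows "t_node A V E x ids u \<le> r_set A V E x ids S"
proof -
  have fV: "finite V" using G unfolding connected_graph_def by blast
  have uV: "u \<in> V" using assms by blast
  have "{t_node A V E x ids w |w. w \<in> V \<and> u \<in> ball V E w (t_node A V E x ids w)} \<subseteq> t_node A V E x ids ` V"
    by blast
  then have fin: "finite {t_node A V E x ids w |w. w \<in> V \<and> u \<in> ball V E w (t_node A V E x ids w)}"
    using finite_subset fV by blast
  have "t_node A V E x ids u \<le> r_node A V E x ids u"
    unfolding r_node_def using uV rw_refl[OF uV] by (intro Max_ge[OF fin]) (auto simp: ball_iff)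
  also have "\<dots> \<le> r_set A V E x ids S"
    unfolding r_set_def using assms fV finite_subset by (intro Max_ge) auto
  finally show ?thesis .
qed

lemma Ev_meas:
  assumes AM: "measurable_alg A" and AT: "runs_in_time A t" and G: "connected_graph V E"
    and inj: "inj_on ids V" and U: "U \<subseteq> V"
  shows "Ev A V E x ids U \<in> sets (rand_space V)"
proof -
  let ?T = "t V E x ids"
  have fU: "finite U" using G U unfolding connected_graph_def by (meson finite_subset)
  have key: "outp A V E x ids \<omega> u \<longleftrightarrow> (\<exists>n\<in>{..?T}. A V E x ids \<omega> u n = Some True \<and> (\<forall>m\<in>{..<n}. A V E x ids \<omega> u m = None))"
    if om: "\<omega> \<in> space (rand_space V)" and u: "u \<in> V" for \<omega> u
  proof
    let ?h = "halt_round A V E x ids \<omega> u"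
    have hf: "?h \<le> ?T" "A V E x ids \<omega> u ?h \<noteq> None" using halt_facts[OF AT G inj om u] by auto
    have lt: "m < ?h \<Longrightarrow> A V E x ids \<omega> u m = None" for m
      unfolding halt_round_def using not_less_Least by blast
    {
      assume "outp A V E x ids \<omega> u"
      then have "A V E x ids \<omega> u ?h = Some True" using hf unfolding outp_def by (auto split: option.splits)
      then show "\<exists>n\<in>{..?T}. A V E x ids \<omega> u n = Some True \<and> (\<forall>m\<in>{..<n}. A V E x ids \<omega> u m = None)"
        using hf lt by auto
    }
    {
      assume "\<exists>n\<in>{..?T}. A V E x ids \<omega> u n = Some True \<and> (\<forall>m\<in>{..<n}. A V E x ids \<omega> u m = None)"
      then obtain n where n: "A V E x ids \<omega> u n = Some True" "\<forall>m<n. A V E x ids \<omega> u m = None" by auto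
      have "?h = n" unfolding halt_round_def
        by (rule Least_equality) (use n in \<open>auto simp: not_less[symmetric]\<close>)
      then show "outp A V E x ids \<omega> u" using n unfolding outp_def by simp
    }
  qed
  have "Ev A V E x ids U = {\<omega> \<in> space (rand_space V). \<forall>u\<in>U. \<exists>n\<in>{..?T}. A V E x ids \<omega> u n = Some True \<and> (\<forall>m\<in>{..<n}. A V E x ids \<omega> u m = None)}"
    unfolding Ev_def using key U by blast
  also have "\<dots> \<in> sets (rand_space V)"
  proof -
    have m: "u \<in> V \<Longrightarrow> (\<lambda>\<omega>. A V E x ids \<omega> u n) \<in> rand_space V \<rightarrow>\<^sub>M count_space UNIV" for u n
      using AM G unfolding measurable_alg_def by blast
    have "Measurable.pred (rand_space V) (\<lambda>\<omega>. \<forall>u\<in>U. \<exists>n\<in>{..?T}. A V E x ids \<omega> u n = Some True \<and> (\<forall>m\<in>{..<n}. A V E x ids \<omega> u m = None))"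
      using U by (intro pred_intros_finite pred_intros_logic pred_count_space_const1 fU finite_atMost finite_lessThan m) auto
    then show ?thesis unfolding pred_def .
  qed
  finally show ?thesis .
qed

lemma indep_prod:
  fixes V :: "'a set" and D :: "nat \<Rightarrow> 'a set" and Em :: "nat \<Rightarrow> ('a \<Rightarrow> nat \<Rightarrow> bool) set"
  assumes fin: "finite V" and ne: "V \<noteq> {}" and k: "0 < k"
    and DV: "\<And>m. m < k \<Longrightarrow> D m \<subseteq> V" and disj: "disjoint_family_on D {..<k}"
    and Em: "\<And>m. m < k \<Longrightarrow> Em m \<in> sets (rand_space V)"
    and dep: "\<And>m \<omega> \<omega>'. m < k \<Longrightarrow> \<omega> \<in> space (rand_space V) \<Longrightarrow> \<omega>' \<in> space (rand_space V) \<Longrightarrow>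
               (\<forall>v\<in>D m. \<omega> v = \<omega>' v) \<Longrightarrow> \<omega> \<in> Em m \<Longrightarrow> \<omega>' \<in> Em m"
  shows "measure (rand_space V) (\<Inter>m<k. Em m) = (\<Prod>m<k. measure (rand_space V) (Em m))"
proof -
  interpret P: prob_space "rand_space V" by (rule prob_rand)
  have ind: "P.indep_vars (\<lambda>m. PiM (D m) (\<lambda>_. coin_space)) (\<lambda>m \<omega>. restrict (\<lambda>i. \<omega> i) (D m)) {..<k}"
    by (rule P.indep_vars_restrict[OF indep_coords[OF ne fin]]) (use DV disj in auto)
  define \<omega>0 :: "'a \<Rightarrow> nat \<Rightarrow> bool" where "\<omega>0 = restrict (\<lambda>_ _. True) V"
  have om0: "\<omega>0 \<in> space (rand_space V)"
    by (simp add: \<omega>0_def rand_space_def space_PiM space_coin)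
  define mg where "mg m \<eta> = (\<lambda>v. if v \<in> D m then \<eta> v else \<omega>0 v)" for m \<eta>
  define B where "B m = mg m -` Em m \<inter> space (PiM (D m) (\<lambda>_. coin_space))" for m
  have mgm: "mg m \<in> measurable (PiM (D m) (\<lambda>_. coin_space)) (rand_space V)" if m: "m < k" for m
    unfolding rand_space_def mg_def
  proof (rule measurable_PiM_single')
    fix v assume "v \<in> V"
    show "(\<lambda>\<eta>. if v \<in> D m then \<eta> v else \<omega>0 v) \<in> measurable (PiM (D m) (\<lambda>_. coin_space)) coin_space"
    proof (cases "v \<in> D m")
      case True then show ?thesis by (simp add: measurable_component_singleton)
    next
      case False then show ?thesis by (simp add: space_coin)
    qed
  next
    show "(\<lambda>\<eta> v. if v \<in> D m then \<eta> v else \<omega>0 v) \<in> space (PiM (D m) (\<lambda>_. coin_space)) \<rightarrow> (\<Pi>\<^sub>E v\<in>V. space coin_space)"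
      using DV[OF m] by (auto simp: space_coin \<omega>0_def space_PiM PiE_def extensional_def)
  qed
  have Bs: "B m \<in> sets (PiM (D m) (\<lambda>_. coin_space))" if "m < k" for m
    unfolding B_def using measurable_sets[OF mgm[OF that] Em[OF that]] .
  have pre: "(\<lambda>\<omega>. restrict (\<lambda>i. \<omega> i) (D m)) -` B m \<inter> space (rand_space V) = Em m" if m: "m < k" for m
  proof (intro set_eqI iffI)
    fix \<omega> assume \<omega>: "\<omega> \<in> (\<lambda>\<omega>. restrict (\<lambda>i. \<omega> i) (D m)) -` B m \<inter> space (rand_space V)"
    then have sp: "\<omega> \<in> space (rand_space V)" and "mg m (restrict \<omega> (D m)) \<in> Em m" by (auto simp: B_def)
    moreover have "mg m (restrict \<omega> (D m)) \<in> space (rand_space V)"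
      using Em[OF m] sets.sets_into_space calculation(2) by blast
    ultimately show "\<omega> \<in> Em m" using dep[OF m, of "mg m (restrict \<omega> (D m))" \<omega>] by (auto simp: mg_def)
  next
    fix \<omega> assume \<omega>: "\<omega> \<in> Em m"
    then have sp: "\<omega> \<in> space (rand_space V)" using Em[OF m] sets.sets_into_space by blast
    have r: "restrict \<omega> (D m) \<in> space (PiM (D m) (\<lambda>_. coin_space))" by (simp add: space_PiM space_coin)
    have "mg m (restrict \<omega> (D m)) \<in> space (rand_space V)" using measurable_space[OF mgm[OF m] r] .
    then have "mg m (restrict \<omega> (D m)) \<in> Em m" using dep[OF m sp _ _ \<omega>] by (auto simp: mg_def)
    then show "\<omega> \<in> (\<lambda>\<omega>. restrict (\<lambda>i. \<omega> i) (D m)) -` B m \<inter> space (rand_space V)"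
      using sp r by (auto simp: B_def)
  qed
  have "P.prob (\<Inter>m\<in>{..<k}. (\<lambda>\<omega>. restrict (\<lambda>i. \<omega> i) (D m)) -` B m \<inter> space (rand_space V)) =
        (\<Prod>m\<in>{..<k}. P.prob ((\<lambda>\<omega>. restrict (\<lambda>i. \<omega> i) (D m)) -` B m \<inter> space (rand_space V)))"
    by (rule P.indep_varsD[OF ind]) (use k Bs in auto)
  then show ?thesis using pre by simp
qed

lemma prod_lt_pow:
  fixes f :: "nat \<Rightarrow> real"
  assumes "\<And>m. m < k \<Longrightarrow> 0 \<le> f m \<and> f m < c" "0 < k"
  shows "(\<Prod>m<k. f m) < c ^ k"
  using assms
proof (induction k)
  case 0 then show ?case by simp
next
  case (Suc k)
  show ?case
  proof (cases "k = 0")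
    case True then show ?thesis using Suc.prems by simp
  next
    case False
    have IH: "(\<Prod>m<k. f m) < c ^ k" using Suc False by auto
    have nn: "0 \<le> (\<Prod>m<k. f m)" using Suc.prems by (intro prod_nonneg) auto
    have fk: "0 \<le> f k" "f k < c" using Suc.prems by auto
    have "(\<Prod>m<Suc k. f m) = f k * (\<Prod>m<k. f m)" by (simp add: mult.commute)
    also have "\<dots> < c * c ^ k" using IH nn fk by (intro mult_strict_mono') auto
    finally show ?thesis by simp
  qed
qed

lemma slab_iff: "u \<in> slab V E U1 S r i \<longleftrightarrow> u \<in> S \<and> i - int r \<le> int (level V E U1 u) \<and> int (level V E U1 u) \<le> i + int r"
  unfolding slab_def by auto

theorem claim1:
  fixes L :: "'v language" and A :: "'v alg" and t :: "'v tbound"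
    and p q \<delta> :: real and lam :: nat
    and V :: "'v set" and E :: "'v \<Rightarrow> 'v \<Rightarrow> bool" and x :: "'v \<Rightarrow> bool list"
    and ids :: "'v \<Rightarrow> nat" and S U1 U2 :: "'v set"
  assumes L_configs: "\<forall>(V', E', x') \<in> L. connected_graph V' E'"
    and p_pos: "0 < p" and p_lt1: "p < 1" and q_pos: "0 < q" and q_le1: "q \<le> 1"
    and pq: "p\<^sup>2 + q > 1"
    and A_local: "local_alg A" and A_meas: "measurable_alg A"
    and A_time: "runs_in_time A t" and t_mono: "time_bound_mono t"
    and A_dec: "decider A L p q"
    and delta: "0 < \<delta>" "\<delta> < p\<^sup>2 + q - 1"
    and lam_def: "lam = 11 * nat \<lceil>ln p / ln (1 - \<delta>)\<rceil>"
    and G: "connected_graph V E" and Id_inj: "inj_on ids V"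
    and split: "splitter A V E x ids lam S U1 U2"
    and rS: "r_set A V E x ids S \<ge> 1"
    and inL: "(U1 \<union> S, induced E (U1 \<union> S), restrict x (U1 \<union> S)) \<in> L"
  shows "let r = int (r_set A V E x ids S); d = int lam * r;
             I = {i :: int. 2 * r < i \<and> i < d - 2 * r \<and>
                    measure (rand_space V)
                      (Ev A V E x ids (slab V E U1 S (r_set A V E x ids S) i)) < 1 - \<delta>}
         in \<exists>i :: int. 2 * r < i \<and> i < d - 2 * r \<and> i \<notin> I"
proof -
  define r where "r = r_set A V E x ids S"
  define k where "k = nat \<lceil>ln p / ln (1 - \<delta>)\<rceil>"
  have r1: "1 \<le> r" using rS r_def by simp
  have d1: "\<delta> < 1"
  proof -
    have "p\<^sup>2 < 1" using p_pos p_lt1 by (simp add: power_less_one_iff abs_less_iff) 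
    then show ?thesis using delta q_le1 by linarith
  qed
  have lnd: "ln (1 - \<delta>) < 0" using delta d1 by simp
  have lnp: "ln p < 0" using p_pos p_lt1 by simp
  have ratio: "0 < ln p / ln (1 - \<delta>)" using lnd lnp by (simp add: divide_neg_neg)
  have k1: "1 \<le> k" unfolding k_def using ratio by linarith
  have lamk: "lam = 11 * k" using lam_def k_def by simp
  have powp: "(1 - \<delta>) ^ k \<le> p"
  proof -
    have "ln p / ln (1 - \<delta>) \<le> real k" unfolding k_def by linarith
    then have "real k * ln (1 - \<delta>) \<le> ln p" using lnd by (simp add: divide_le_eq)
    then have "ln ((1 - \<delta>) ^ k) \<le> ln p" using d1 by (simp add: ln_realpow)
    then show ?thesis using d1 p_pos by simp
  qed
  have fV: "finite V" using G unfolding connected_graph_def by blast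
  have SU: "S \<inter> U1 = {}" "S \<inter> U2 = {}" "U1 \<inter> U2 = {}" "S \<union> U1 \<union> U2 = V"
    and far: "\<forall>u\<in>U1. \<forall>w\<in>U2. lam * r \<le> gdist V E u w"
    using split unfolding splitter_def r_def by auto
  have SV: "S \<subseteq> V" and U1V: "U1 \<subseteq> V" using SU by auto
  define d where "d = int lam * int r"
  have dnat: "11 * r \<le> lam * r" using lamk k1 by simp
  have dge: "d \<ge> 11 * int r"
  proof -
    have "int (11 * r) \<le> int (lam * r)" using dnat by (simp only: of_nat_le_iff)
    then show ?thesis unfolding d_def by simp
  qed
  interpret PV: prob_space "rand_space V" by (rule prob_rand)
  have goal: "\<exists>i::int. 2 * int r < i \<and> i < d - 2 * int r \<and>
      \<not> measure (rand_space V) (Ev A V E x ids (slab V E U1 S r i)) < 1 - \<delta>"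
  proof (cases "U1 = {}")
    case True
    define c where "c = (Min {} :: nat)"
    have lev: "level V E U1 u = c" for u unfolding level_def c_def True by simp
    define i where "i = (if int c \<le> 3 * int r + 1 then d - 2 * int r - 1 else 2 * int r + 1)"
    have "slab V E U1 S r i = {}" using lev dge r1 unfolding i_def by (auto simp: slab_iff)
    moreover have "Ev A V E x ids {} = space (rand_space V)" unfolding Ev_def by simp
    ultimately have "measure (rand_space V) (Ev A V E x ids (slab V E U1 S r i)) = 1"
      using PV.prob_space by simp
    moreover have "2 * int r < i \<and> i < d - 2 * int r" using dge r1 unfolding i_def by auto
    ultimately show ?thesis using delta by (intro exI[of _ i]) auto
  next
    case U1ne: False
    show ?thesis
    proof (rule ccontr)
      assume "\<not> ?thesis"
      then have H: "\<And>i. 2 * int r < i \<Longrightarrow> i < d - 2 * int r \<Longrightarrow>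
          measure (rand_space V) (Ev A V E x ids (slab V E U1 S r i)) < 1 - \<delta>" by auto
      define W where "W = U1 \<union> S"
      have WV: "W \<subseteq> V" using SV U1V W_def by auto
      have GW: "connected_graph W (induced E W)" using L_configs inL unfolding W_def by fastforce
      have injW: "inj_on ids W" using Id_inj WV inj_on_subset by blast
      have dec: "p \<le> measure (rand_space W) (Ev A W (induced E W) x ids W)"
        using A_dec GW injW inL unfolding decider_def W_def by blast
      define ii where "ii m = int (2 * r + 1 + m * (4 * r + 1))" for m
      define SL where "SL m = slab V E U1 S r (ii m)" for m
      have fU1: "finite U1" using fV U1V finite_subset by blast
      have range: "2 * int r < ii m \<and> ii m < d - 2 * int r" if m: "m < k" for m
      proof -
        have "(m + 1) * (4 * r + 1) \<le> k * (4 * r + 1)" using m by (intro mult_le_mono1) auto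
        moreover have "k \<le> k * r" using r1 by simp
        moreover have "1 \<le> k * r" using r1 k1 by simp
        moreover have "k * (4 * r + 1) = 4 * (k * r) + k" by (simp add: algebra_simps)
        moreover have "2 * r + 1 + m * (4 * r + 1) + 2 * r = (m + 1) * (4 * r + 1)" by (simp add: algebra_simps)
        moreover have "11 * k * r = 11 * (k * r)" by simp
        ultimately have "2 * r + 1 + m * (4 * r + 1) + 2 * r < 11 * k * r" by linarith
        then have "2 * r + 1 + m * (4 * r + 1) + 2 * r < lam * r" using lamk by simp
        then have "int (2 * r + 1 + m * (4 * r + 1) + 2 * r) < int (lam * r)" by (simp only: of_nat_less_iff)
        moreover have e1: "d = int (lam * r)" unfolding d_def by simp
        moreover have "0 \<le> int m * (4 * int r + 1)" by simp
        ultimately show ?thesis unfolding ii_def e1 by (simp only: of_nat_add of_nat_mult of_nat_numeral of_nat_1) linarith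
      qed
      have SLd: "u \<in> S \<and> ii m - int r \<le> int (level V E U1 u) \<and> int (level V E U1 u) \<le> ii m + int r"
        if "u \<in> SL m" for u m using that unfolding SL_def slab_iff by blast
      have ballW: "ball V E u r \<subseteq> W" if m: "m < k" and u: "u \<in> SL m" for m u
      proof
        fix v assume v: "v \<in> ball V E u r"
        have uV: "u \<in> V" and vV: "v \<in> V" using rw_in v ball_iff by metis+
        show "v \<in> W"
        proof (rule ccontr)
          assume "v \<notin> W"
          then have vU2: "v \<in> U2" using vV SU W_def by auto
          obtain w0 where w0: "w0 \<in> U1" "level V E U1 u = gdist V E w0 u" using level_ex[OF fU1 U1ne] by blast
          have "gdist V E w0 v \<le> gdist V E w0 u + gdist V E u v" using gd_tri[OF G] w0 U1V uV vV by auto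
          moreover have "gdist V E u v \<le> r" using v by (simp add: ball_iff gd_le)
          ultimately have "int (gdist V E w0 v) \<le> int (level V E U1 u) + int r" using w0 by simp
          moreover have "int (level V E U1 u) \<le> ii m + int r" using SLd[OF u] by blast
          moreover have "d \<le> int (gdist V E w0 v)"
          proof -
            have "lam * r \<le> gdist V E w0 v" using far w0 vU2 by blast
            then have "int (lam * r) \<le> int (gdist V E w0 v)" by (simp only: of_nat_le_iff)
            then show ?thesis unfolding d_def by simp
          qed
          ultimately show False using range[OF m] by linarith
        qed
      qed
      define D where "D m = (\<Union>u\<in>SL m. ball V E u r)" for m
      have DW: "D m \<subseteq> W" if "m < k" for m using ballW[OF that] D_def by blast
      have disj1: "D m \<inter> D m' = {}" if mm: "m < m'" "m' < k" for m m'
      proof (rule ccontr)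
        assume "D m \<inter> D m' \<noteq> {}"
        then obtain v u u' where uv: "u \<in> SL m" "u' \<in> SL m'" "v \<in> ball V E u r" "v \<in> ball V E u' r"
          unfolding D_def by blast
        have uV: "u \<in> V" "u' \<in> V" "v \<in> V" using rw_in uv(3,4) ball_iff by metis+
        have g1: "gdist V E u v \<le> r" "gdist V E u' v \<le> r" using uv by (simp_all add: ball_iff gd_le)
        have "gdist V E u u' \<le> gdist V E u v + gdist V E v u'" using gd_tri[OF G] uV by auto
        also have "gdist V E v u' = gdist V E u' v" using gd_sym[OF G] uV by auto
        finally have "gdist V E u u' \<le> 2 * r" using g1 by simp
        then have "level V E U1 u' \<le> level V E U1 u + 2 * r"
          using level_lip[OF G U1V U1ne uV(1,2)] by simp
        then have "int (level V E U1 u') \<le> int (level V E U1 u) + 2 * int r" by simp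
        moreover have "ii m' \<ge> ii m + 4 * int r + 1"
        proof -
          have "m * (4 * r + 1) + (4 * r + 1) \<le> m' * (4 * r + 1)"
            using mm mult_le_mono1[of "Suc m" m' "4 * r + 1"] by simp
          then have "2 * r + 1 + m * (4 * r + 1) + (4 * r + 1) \<le> 2 * r + 1 + m' * (4 * r + 1)" by simp
          then have "int (2 * r + 1 + m * (4 * r + 1) + (4 * r + 1)) \<le> int (2 * r + 1 + m' * (4 * r + 1))"
            by (simp only: of_nat_le_iff)
          then show ?thesis unfolding ii_def by (simp only: of_nat_add of_nat_mult of_nat_numeral of_nat_1)
        qed
        ultimately show False using SLd[OF uv(1)] SLd[OF uv(2)] by simp
      qed
      have disj: "disjoint_family_on D {..<k}"
        unfolding disjoint_family_on_def
        by (metis disj1 inf_commute lessThan_iff linorder_neqE_nat)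
      have SLS: "SL m \<subseteq> S" for m using SLd by blast
      have rsr: "halt_round A V E x ids \<omega> u \<le> r \<and> A V E x ids \<omega> u (halt_round A V E x ids \<omega> u) \<noteq> None"
        if "\<omega> \<in> space (rand_space V)" "u \<in> S" for \<omega> u
      proof -
        have uV: "u \<in> V" using that SV by blast
        have "halt_round A V E x ids \<omega> u \<le> t_node A V E x ids u"
          using halt_le_tnode[OF A_time G Id_inj that(1) uV] .
        also have "\<dots> \<le> r" using tnode_le_rset[OF G SV that(2), of A x ids] r_def by simp
        finally show ?thesis using halt_facts[OF A_time G Id_inj that(1) uV, of x] by blast
      qed
      have locVV: "outp A V E x ids \<omega> u = outp A V E x ids \<omega>' u"
        if "\<omega> \<in> space (rand_space V)" "\<omega>' \<in> space (rand_space V)" "u \<in> S" "\<forall>v\<in>ball V E u r. \<omega> v = \<omega>' v"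
        for \<omega> \<omega>' u
      proof (rule outp_local[where R=r and x=x and ids=ids and u=u and \<omega>=\<omega> and \<omega>'=\<omega>' and V'=V and E'=E, OF A_local G G that(1,2) _ _ _ _ _ rsr[OF that(1,3), THEN conjunct1] rsr[OF that(1,3), THEN conjunct2]])
        show "u \<in> V" "u \<in> V" using that SV by auto
        show "\<forall>n\<le>r. ball V E u n = ball V E u n" by simp
        show "\<forall>a\<in>ball V E u r. \<forall>b\<in>ball V E u r. E a b = E a b" by simp
        show "\<forall>a\<in>ball V E u r. \<omega> a = \<omega>' a" using that(4) .
      qed
      have locVW: "outp A V E x ids \<omega> u = outp A W (induced E W) x ids (restrict \<omega> W) u"
        if om: "\<omega> \<in> space (rand_space V)" and m: "m < k" and u: "u \<in> SL m" for \<omega> u m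
      proof -
        have uS: "u \<in> S" using subsetD[OF SLS u] .
        have bW: "ball V E u r \<subseteq> W" by (rule ballW[OF m u])
        have sub: "n \<le> r \<Longrightarrow> ball V E u n \<subseteq> ball V E u r" for n
          by (auto simp: ball_iff intro: rw_mono)
        show ?thesis
        proof (rule outp_local[where R=r and x=x and ids=ids and u=u and \<omega>=\<omega> and \<omega>'="restrict \<omega> W" and V'=W and E'="induced E W", OF A_local G GW om _ _ _ _ _ _ rsr[OF om uS, THEN conjunct1] rsr[OF om uS, THEN conjunct2]])
          show "restrict \<omega> W \<in> space (rand_space W)"
            using om WV by (auto simp: rand_space_def space_PiM)
          show "u \<in> V" "u \<in> W" using uS SV W_def by auto
          show "\<forall>n\<le>r. ball V E u n = ball W (induced E W) u n"
          proof (intro allI impI set_eqI)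
            fix n w assume n: "n \<le> r"
            show "w \<in> ball V E u n \<longleftrightarrow> w \<in> ball W (induced E W) u n"
            proof -
              have "\<forall>y. rw V E n u y \<longrightarrow> y \<in> W" using sub[OF n] bW by (auto simp: ball_iff)
              then show ?thesis using rw_induced1[OF WV, of E n u w] rw_induced2[of V E n u w W]
                by (auto simp: ball_iff)
            qed
          qed
          show "\<forall>a\<in>ball V E u r. \<forall>b\<in>ball V E u r. E a b = induced E W a b"
            using bW by (auto simp: induced_def)
          show "\<forall>a\<in>ball V E u r. \<omega> a = restrict \<omega> W a" using bW by auto
        qed
      qed
      define SS where "SS = (\<Union>m<k. SL m)"
      have SSW: "SS \<subseteq> W" using SLS W_def SS_def by auto
      have EvW: "Ev A W (induced E W) x ids SS \<in> sets (rand_space W)"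
        by (rule Ev_meas[OF A_meas A_time GW injW SSW])
      have "p \<le> measure (rand_space W) (Ev A W (induced E W) x ids SS)"
      proof -
        interpret PW: prob_space "rand_space W" by (rule prob_rand)
        have "Ev A W (induced E W) x ids W \<subseteq> Ev A W (induced E W) x ids SS"
          using SSW unfolding Ev_def by blast
        then have "measure (rand_space W) (Ev A W (induced E W) x ids W) \<le> measure (rand_space W) (Ev A W (induced E W) x ids SS)"
          by (rule PW.finite_measure_mono[OF _ EvW])
        then show ?thesis using dec by linarith
      qed
      also have "measure (rand_space W) (Ev A W (induced E W) x ids SS) = measure (rand_space V) (Ev A V E x ids SS)"
      proof -
        have rm: "(\<lambda>\<omega>. restrict \<omega> W) \<in> measurable (rand_space V) (rand_space W)"
          unfolding rand_space_def by (rule measurable_restrict_subset[OF WV])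
        have "rand_space W = distr (rand_space V) (rand_space W) (\<lambda>\<omega>. restrict \<omega> W)"
          unfolding rand_space_def by (rule product_prob_space.distr_restrict[OF coinP WV fV])
        then have "measure (rand_space W) (Ev A W (induced E W) x ids SS) =
            measure (rand_space V) ((\<lambda>\<omega>. restrict \<omega> W) -` Ev A W (induced E W) x ids SS \<inter> space (rand_space V))"
          using measure_distr[OF rm EvW] by simp
        also have "(\<lambda>\<omega>. restrict \<omega> W) -` Ev A W (induced E W) x ids SS \<inter> space (rand_space V) = Ev A V E x ids SS"
        proof -
          have "restrict \<omega> W \<in> space (rand_space W)" if "\<omega> \<in> space (rand_space V)" for \<omega>
            using measurable_space[OF rm that] .
          then show ?thesis unfolding Ev_def SS_def using locVW by auto
        qed
        finally show ?thesis .
      qed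
      also have "Ev A V E x ids SS = (\<Inter>m<k. Ev A V E x ids (SL m))"
      proof -
        have k0: "0 \<in> {..<k}" using k1 by simp
        show ?thesis unfolding Ev_def SS_def using k0 by blast
      qed
      also have "measure (rand_space V) (\<Inter>m<k. Ev A V E x ids (SL m)) = (\<Prod>m<k. measure (rand_space V) (Ev A V E x ids (SL m)))"
      proof (rule indep_prod[OF fV])
        show "V \<noteq> {}" using G unfolding connected_graph_def by blast
        show "0 < k" using k1 by simp
        show "D m \<subseteq> V" if "m < k" for m using DW[OF that] WV by blast
        show "disjoint_family_on D {..<k}" by (rule disj)
        show "Ev A V E x ids (SL m) \<in> sets (rand_space V)" if "m < k" for m
          using Ev_meas[OF A_meas A_time G Id_inj, of "SL m" x] SLS SV by blast
        fix m \<omega> \<omega>' assume m: "m < k" and om: "\<omega> \<in> space (rand_space V)" "\<omega>' \<in> space (rand_space V)"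
          and ag: "\<forall>v\<in>D m. \<omega> v = \<omega>' v" and inE: "\<omega> \<in> Ev A V E x ids (SL m)"
        have "outp A V E x ids \<omega>' u" if u: "u \<in> SL m" for u
        proof -
          have "outp A V E x ids \<omega> u" using inE u unfolding Ev_def by blast
          moreover have "\<forall>v\<in>ball V E u r. \<omega> v = \<omega>' v" using ag u unfolding D_def by blast
          ultimately show ?thesis using locVV[OF om _] SLS u by blast
        qed
        then show "\<omega>' \<in> Ev A V E x ids (SL m)" using om unfolding Ev_def by blast
      qed
      also have "\<dots> < (1 - \<delta>) ^ k"
      proof (rule prod_lt_pow)
        show "0 < k" using k1 by simp
        fix m assume "m < k"
        then show "0 \<le> measure (rand_space V) (Ev A V E x ids (SL m)) \<and> measure (rand_space V) (Ev A V E x ids (SL m)) < 1 - \<delta>"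
          using H range unfolding SL_def by auto
      qed
      finally show False using powp by simp
    qed
  qed
  then show ?thesis unfolding Let_def d_def r_def by auto
qed

end
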